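(* Consider control protocol (C4) with $r_1=\cdots=r_n\in[\frac1{n-1},1)$, and let $c_\eta=\frac{2\eta(n-1)}{n}$. If $\eta\le\frac{nr_1}{2(n-1)}$, then for any $\varepsilon>0$ the set $E'_\varepsilon=\{(x_1,\dots,x_n)\in[0,1]^n: c_\eta-\varepsilon\le\max_{i,j}|x_i-x_j|\le c_\eta\}$ is finite-time robustly reachable from $[0,1]^n$.
   Context: Fix $n\ge3$, $\mathcal V=\{1,\dots,n\}$, confidence thresholds $r_i\in(0,1]$, $\eta>0$. States $x(t)\in[0,1]^n$. Neighbor set $\mathcal N_i(t)=\{j:|x_j(t)-x_i(t)|\le r_i\}$ (contains $i$), $\Pi_{[0,1]}(y)=\min\{1,\max\{0,y\}\}$. Control protocol (C4): $x_i(t+1)=\Pi_{[0,1]}\big(|\mathcal N_i(t)|^{-1}[x_i(t)+\sum_{j\in\mathcal N_i(t)\setminus\{i\}}(x_j(t)+u_{ji}(t)+b_{ji}(t))]\big)$, where for $j\in\mathcal N_i(t)\setminus\{i\}$: $\delta_i(t)\in(0,\eta)$ is a chosen parameter, $u_{ji}(t)\in[-\eta+\delta_i(t),\eta-\delta_i(t)]$ a chosen control input, $b_{ji}(t)\in[-\delta_i(t),\delta_i(t)]$ an arbitrary uncertainty; the choices may depend on $x(0),\dots,x(t)$. A set $S\subseteq[0,1]^n$ is finite-time robustly reachable from $[0,1]^n$ under the protocol if there exist constants $T>0$ and $\varepsilon'\in(0,\eta)$ such that for every $x(0)\in[0,1]^n$, either $x(0)\in S$, or one can choose $\delta_i(t)\in[\varepsilon',\eta)$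 and $u_{ji}(t)\in[-\eta+\delta_i(t),\eta-\delta_i(t)]$ ($0\le t<T$, $i\in\mathcal V$, $j\in\mathcal N_i(t)\setminus\{i\}$) guaranteeing that for arbitrary $b_{ji}(t)\in[-\delta_i(t),\delta_i(t)]$ there is $t\in[1,T]$ with $x(t)\in S$. *)

theory Defs
  imports Complex_Main
begin

text \<open>Agents are indexed by 1..n; a state is a function nat => real whose values
  outside 1..n are irrelevant.\<close>

definition proj01 :: "real \<Rightarrow> real" where
  "proj01 y = min 1 (max 0 y)"

definition nbrs :: "nat \<Rightarrow> (nat \<Rightarrow> real) \<Rightarrow> (nat \<Rightarrow> real) \<Rightarrow> nat \<Rightarrow> nat set" where
  "nbrs n r x i = {j \<in> {1..n}. \<bar>x j - x i\<bar> \<le> r i}"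

text \<open>One step of protocol (C4): u j i = u_{ji}(t), b j i = b_{ji}(t).\<close>
definition step_C4 :: "nat \<Rightarrow> (nat \<Rightarrow> real) \<Rightarrow> (nat \<Rightarrow> real)
    \<Rightarrow> (nat \<Rightarrow> nat \<Rightarrow> real) \<Rightarrow> (nat \<Rightarrow> nat \<Rightarrow> real) \<Rightarrow> (nat \<Rightarrow> real)" where
  "step_C4 n r x u b = (\<lambda>i. proj01 ((x i + (\<Sum>j\<in>nbrs n r x i - {i}. x j + u j i + b j i))
                                       / real (card (nbrs n r x i))))"

text \<open>History [x(0),...,x(t)] of the closed loop under a feedback strategy us
  (depending on the whole history) and a disturbance sequence b (b t j i = b_{ji}(t)).\<close>
primrec hist_C4 :: "nat \<Rightarrow> (nat \<Rightarrow> real) \<Rightarrow> ((nat \<Rightarrow> real) list \<Rightarrow> nat \<Rightarrow> nat \<Rightarrow> real)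
    \<Rightarrow> (nat \<Rightarrow> nat \<Rightarrow> nat \<Rightarrow> real) \<Rightarrow> (nat \<Rightarrow> real) \<Rightarrow> nat \<Rightarrow> (nat \<Rightarrow> real) list" where
  "hist_C4 n r us b x0 0 = [x0]"
| "hist_C4 n r us b x0 (Suc t) =
     hist_C4 n r us b x0 t @ [step_C4 n r (last (hist_C4 n r us b x0 t)) (us (hist_C4 n r us b x0 t)) (b t)]"

definition in_cube :: "nat \<Rightarrow> (nat \<Rightarrow> real) \<Rightarrow> bool" where
  "in_cube n x \<longleftrightarrow> (\<forall>i\<in>{1..n}. 0 \<le> x i \<and> x i \<le> 1)"

text \<open>The parameters delta_i(t) and inputs u_{ji}(t) are given by feedback maps of the
  history x(0),...,x(t); the disturbance is arbitrary within its bounds.\<close>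
definition rob_reachable_C4 :: "nat \<Rightarrow> (nat \<Rightarrow> real) \<Rightarrow> real \<Rightarrow> (nat \<Rightarrow> real) set \<Rightarrow> bool" where
  "rob_reachable_C4 n r \<eta> S \<longleftrightarrow>
    (\<exists>T::nat. T > 0 \<and> (\<exists>\<epsilon>'. 0 < \<epsilon>' \<and> \<epsilon>' < \<eta> \<and>
      (\<forall>x0. in_cube n x0 \<longrightarrow> x0 \<in> S \<or>
        (\<exists>(\<delta>s :: (nat \<Rightarrow> real) list \<Rightarrow> nat \<Rightarrow> real) us.
           (\<forall>h. \<forall>i\<in>{1..n}. \<epsilon>' \<le> \<delta>s h i \<and> \<delta>s h i < \<eta>) \<and>
           (\<forall>h. \<forall>i\<in>{1..n}. \<forall>j\<in>{1..n}. - \<eta> + \<delta>s h i \<le> us h j i \<and> us h j i \<le> \<eta> - \<delta>s h i) \<and>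
           (\<forall>b. (\<forall>t<T. \<forall>i\<in>{1..n}. \<forall>j\<in>{1..n}.
                    \<bar>b t j i\<bar> \<le> \<delta>s (hist_C4 n r us b x0 t) i)
                \<longrightarrow> (\<exists>t\<in>{1..T}. last (hist_C4 n r us b x0 t) \<in> S))))))"

definition E'_set :: "nat \<Rightarrow> real \<Rightarrow> real \<Rightarrow> (nat \<Rightarrow> real) set" where
  "E'_set n c \<epsilon> = {x. in_cube n x \<and>
      c - \<epsilon> \<le> Max {\<bar>x i - x j\<bar> | i j. i \<in> {1..n} \<and> j \<in> {1..n}} \<and>
      Max {\<bar>x i - x j\<bar> | i j. i \<in> {1..n} \<and> j \<in> {1..n}} \<le> c}"

end

theory Submission
  imports Defs
begin


lemma proj_le: "proj01 y \<le> max 0 y" by (simp add: proj01_def)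
lemma proj_ge: "min 1 y \<le> proj01 y" by (simp add: proj01_def)
lemma proj_0: "0 \<le> proj01 y" by (simp add: proj01_def)
lemma proj_1: "proj01 y \<le> 1" by (simp add: proj01_def)
lemma proj_id: "0 \<le> y \<Longrightarrow> y \<le> 1 \<Longrightarrow> proj01 y = y" by (simp add: proj01_def)
lemma proj_lip: "\<bar>proj01 a - proj01 b\<bar> \<le> \<bar>a - b\<bar>" by (simp add: proj01_def abs_if min_def max_def)

definition inr :: "nat \<Rightarrow> real \<Rightarrow> (nat\<Rightarrow>real) \<Rightarrow> (nat\<Rightarrow>real) \<Rightarrow> nat \<Rightarrow> real" where
 "inr n \<rho> x w i = ((\<Sum>j\<in>nbrs n (\<lambda>_. \<rho>) x i. x j) + (\<Sum>j\<in>nbrs n (\<lambda>_. \<rho>) x i - {i}. w j))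
     / real (card (nbrs n (\<lambda>_. \<rho>) x i))"

lemma nb_fin: "finite (nbrs n r x i)" by (simp add: nbrs_def)
lemma nb_self: "i \<in> {1..n} \<Longrightarrow> 0 \<le> \<rho> \<Longrightarrow> i \<in> nbrs n (\<lambda>_. \<rho>) x i" by (simp add: nbrs_def)
lemma nb_mem: "j \<in> nbrs n (\<lambda>_. \<rho>) x i \<longleftrightarrow> j \<in> {1..n} \<and> \<bar>x j - x i\<bar> \<le> \<rho>" by (simp add: nbrs_def)

lemma step_eq:
  assumes "i \<in> {1..n}" "0 \<le> \<rho>"
  shows "step_C4 n (\<lambda>_. \<rho>) x u b i = proj01 (inr n \<rho> x (\<lambda>j. u j i + b j i) i)"
proof -
  let ?N = "nbrs n (\<lambda>_. \<rho>) x i"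
  have iN: "i \<in> ?N" using nb_self assms by blast
  have "x i + (\<Sum>j\<in>?N - {i}. x j + u j i + b j i) = x i + (\<Sum>j\<in>?N - {i}. x j) + (\<Sum>j\<in>?N - {i}. u j i + b j i)"
    by (simp add: sum.distrib add.assoc)
  also have "x i + (\<Sum>j\<in>?N - {i}. x j) = (\<Sum>j\<in>?N. x j)"
    using sum.remove[OF nb_fin iN, of x] by simp
  finally show ?thesis unfolding step_C4_def inr_def by simp
qed

lemma inr_iso:
  assumes "i \<in> {1..n}" "0 \<le> \<rho>" "nbrs n (\<lambda>_. \<rho>) x i = {i}"
  shows "inr n \<rho> x w i = x i"
  using assms by (simp add: inr_def)

lemma inr_upper:
  assumes "i \<in> {1..n}" "0 \<le> \<rho>"
    and "(\<Sum>j\<in>nbrs n (\<lambda>_. \<rho>) x i. x j) \<le> real (card (nbrs n (\<lambda>_. \<rho>) x i)) * A"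
    and "\<forall>j\<in>nbrs n (\<lambda>_. \<rho>) x i - {i}. w j \<le> h"
  shows "inr n \<rho> x w i \<le> A + h * (real (card (nbrs n (\<lambda>_. \<rho>) x i)) - 1) / real (card (nbrs n (\<lambda>_. \<rho>) x i))"
proof -
  let ?N = "nbrs n (\<lambda>_. \<rho>) x i"
  let ?k = "real (card ?N)"
  have iN: "i \<in> ?N" using nb_self assms by blast
  have kpos: "?k \<ge> 1" using iN nb_fin[of n _ x i] by (metis One_nat_def card_gt_0_iff empty_iff of_nat_1 of_nat_mono  Suc_leI)
  have c1: "card (?N - {i}) = card ?N - 1" using iN nb_fin by (simp add: card_Diff_singleton)
  have "(\<Sum>j\<in>?N - {i}. w j) \<le> real (card (?N - {i})) * h"
    using sum_bounded_above[of "?N - {i}" w h] assms(4) by simp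
  also have "real (card (?N - {i})) = ?k - 1" using c1 kpos by (simp add: of_nat_diff)
  finally have sw: "(\<Sum>j\<in>?N - {i}. w j) \<le> (?k - 1) * h" .
  have "inr n \<rho> x w i = ((\<Sum>j\<in>?N. x j) + (\<Sum>j\<in>?N - {i}. w j)) / ?k" by (simp add: inr_def)
  also have "\<dots> \<le> (?k * A + (?k - 1) * h) / ?k"
    using assms(3) sw kpos by (intro divide_right_mono) auto
  also have "\<dots> = A + h * (?k - 1) / ?k" using kpos by (simp add: field_simps)
  finally show ?thesis .
qed

lemma inr_lower:
  assumes "i \<in> {1..n}" "0 \<le> \<rho>"
    and "real (card (nbrs n (\<lambda>_. \<rho>) x i)) * A \<le> (\<Sum>j\<in>nbrs n (\<lambda>_. \<rho>) x i. x j)"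
    and "\<forall>j\<in>nbrs n (\<lambda>_. \<rho>) x i - {i}. h \<le> w j"
  shows "A + h * (real (card (nbrs n (\<lambda>_. \<rho>) x i)) - 1) / real (card (nbrs n (\<lambda>_. \<rho>) x i)) \<le> inr n \<rho> x w i"
proof -
  let ?N = "nbrs n (\<lambda>_. \<rho>) x i"
  let ?k = "real (card ?N)"
  have iN: "i \<in> ?N" using nb_self assms by blast
  have kpos: "?k \<ge> 1" using iN nb_fin[of n _ x i] by (metis One_nat_def card_gt_0_iff empty_iff of_nat_1 of_nat_mono  Suc_leI)
  have c1: "card (?N - {i}) = card ?N - 1" using iN nb_fin by (simp add: card_Diff_singleton)
  have "real (card (?N - {i})) * h \<le> (\<Sum>j\<in>?N - {i}. w j)"
    using sum_bounded_below[of "?N - {i}" h w] assms(4) by simp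
  moreover have "real (card (?N - {i})) = ?k - 1" using c1 kpos by (simp add: of_nat_diff)
  ultimately have sw: "(?k - 1) * h \<le> (\<Sum>j\<in>?N - {i}. w j)" by simp
  have "A + h * (?k - 1) / ?k = (?k * A + (?k - 1) * h) / ?k" using kpos by (simp add: field_simps)
  also have "\<dots> \<le> ((\<Sum>j\<in>?N. x j) + (\<Sum>j\<in>?N - {i}. w j)) / ?k"
    using assms(3) sw kpos by (intro divide_right_mono) auto
  also have "\<dots> = inr n \<rho> x w i" by (simp add: inr_def)
  finally show ?thesis .
qed

lemma sum_le_max:
  assumes "finite N" "\<forall>j\<in>N. x j \<le> P" shows "(\<Sum>j\<in>N. x j) \<le> real (card N) * P"
  using sum_bounded_above[of N x P] assms by simp
lemma sum_ge_min:
  assumes "finite N" "\<forall>j\<in>N. P \<le> x j" shows "real (card N) * P \<le> (\<Sum>j\<in>N. x j)"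
  using sum_bounded_below[of N P x] assms by simp



lemma spread_card:
  fixes A :: "real set"
  shows "finite A \<Longrightarrow> card A = Suc (Suc k) \<Longrightarrow> (\<forall>a\<in>A. \<forall>b\<in>A. a \<noteq> b \<longrightarrow> \<rho> < \<bar>a - b\<bar>)
     \<Longrightarrow> \<exists>lo\<in>A. \<exists>hi\<in>A. real (Suc k) * \<rho> < hi - lo"
proof (induction k arbitrary: A)
  case 0
  then obtain a b where ab: "A = {a, b}" "a \<noteq> b" by (metis card_2_iff numeral_2_eq_2)
  then have "\<rho> < \<bar>a - b\<bar>" using 0 by auto
  then show ?case using ab by (cases "a \<le> b") auto
next
  case (Suc k)
  let ?m = "Max A"
  have ne: "A \<noteq> {}" using Suc.prems by auto
  have mA: "?m \<in> A" using Max_in Suc.prems ne by blast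
  have c: "card (A - {?m}) = Suc (Suc k)" using Suc.prems mA by simp
  obtain lo hi where lh: "lo \<in> A - {?m}" "hi \<in> A - {?m}" "real (Suc k) * \<rho> < hi - lo"
    using Suc.IH[of "A - {?m}"] c Suc.prems by auto
  have "hi \<le> ?m" using lh Suc.prems by auto
  moreover have "\<rho> < \<bar>?m - hi\<bar>" using Suc.prems(3) mA lh by auto
  ultimately have "\<rho> < ?m - hi" by auto
  then have "real (Suc (Suc k)) * \<rho> < ?m - lo" using lh by (simp add: algebra_simps)
  then show ?case using mA lh by blast
qed

definition isoA :: "nat \<Rightarrow> real \<Rightarrow> (nat\<Rightarrow>real) \<Rightarrow> nat \<Rightarrow> bool" where
  "isoA n \<rho> x i \<longleftrightarrow> (\<forall>j\<in>{1..n}. j \<noteq> i \<longrightarrow> \<rho> < \<bar>x j - x i\<bar>)"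

lemma iso_nbrs: "i \<in> {1..n} \<Longrightarrow> 0 \<le> \<rho> \<Longrightarrow> isoA n \<rho> x i \<Longrightarrow> nbrs n (\<lambda>_. \<rho>) x i = {i}"
  by (auto simp: isoA_def nbrs_def)

lemma exists_nbr:
  assumes n3: "3 \<le> n" and r: "1 / real (n - 1) \<le> \<rho>" and cube: "in_cube n x"
  shows "\<exists>i\<in>{1..n}. \<exists>j\<in>{1..n}. i \<noteq> j \<and> \<bar>x i - x j\<bar> \<le> \<rho>"
proof (rule ccontr)
  assume "\<not> ?thesis"
  then have gap: "\<forall>i\<in>{1..n}. \<forall>j\<in>{1..n}. i \<noteq> j \<longrightarrow> \<rho> < \<bar>x i - x j\<bar>"
    by (meson not_le)
  have "0 < real (n - 1)" using n3 by simp
  then have rpos: "0 < \<rho>" using r by (meson divide_pos_pos less_le_trans zero_less_one)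
  have inj: "inj_on x {1..n}"
  proof (rule inj_onI, rule ccontr)
    fix i j assume h: "i\<in>{1..n}" "j\<in>{1..n}" "x i = x j" "i \<noteq> j"
    then have "\<rho> < \<bar>x i - x j\<bar>" using gap by blast
    then show False using h rpos by simp
  qed
  have "card (x ` {1..n}) = n" using card_image[OF inj] by simp
  then have cA: "card (x ` {1..n}) = Suc (Suc (n - 2))" using n3 by simp
  have g2: "\<forall>a\<in>x ` {1..n}. \<forall>b\<in>x ` {1..n}. a \<noteq> b \<longrightarrow> \<rho> < \<bar>a - b\<bar>"
  proof (intro ballI impI)
    fix a b assume "a \<in> x ` {1..n}" "b \<in> x ` {1..n}" "a \<noteq> b"
    then obtain i j where "i \<in> {1..n}" "j \<in> {1..n}" "a = x i" "b = x j" "i \<noteq> j" by blast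
    then show "\<rho> < \<bar>a - b\<bar>" using gap by blast
  qed
  have fin: "finite (x ` {1..n})" by simp
  obtain lo hi where lh: "lo \<in> x ` {1..n}" "hi \<in> x ` {1..n}" "real (Suc (n - 2)) * \<rho> < hi - lo"
    using spread_card[OF fin cA g2] by blast
  have "hi - lo \<le> 1"
  proof -
    obtain a b where "a \<in> {1..n}" "b \<in> {1..n}" "hi = x a" "lo = x b" using lh(1,2) by blast
    then show ?thesis using cube unfolding in_cube_def by (smt (verit))
  qed
  moreover have "Suc (n - 2) = n - 1" using n3 by arith
  then have "real (Suc (n - 2)) = real (n - 1)" by simp
  moreover have "1 \<le> real (n - 1) * \<rho>"
  proof -
    have p: "0 < real (n - 1)" using n3 by simp
    have "real (n - 1) * (1 / real (n - 1)) \<le> real (n - 1) * \<rho>" using r p by (intro mult_left_mono) auto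
    then show ?thesis using p by simp
  qed
  ultimately show False using lh(3) by simp
qed

definition Fz :: "nat \<Rightarrow> real \<Rightarrow> (nat\<Rightarrow>real) \<Rightarrow> nat set" where
  "Fz n \<rho> x = {i\<in>{1..n}. isoA n \<rho> x i \<and> (\<forall>j\<in>{1..n}. x i \<le> x j \<longrightarrow> isoA n \<rho> x j)}"

lemma Fz_below:
  assumes "f \<in> Fz n \<rho> x" "j \<in> {1..n} - Fz n \<rho> x"
  shows "x j < x f - \<rho>"
proof -
  have fi: "f \<in> {1..n}" "isoA n \<rho> x f" "\<forall>j\<in>{1..n}. x f \<le> x j \<longrightarrow> isoA n \<rho> x j"
    using assms(1) by (auto simp: Fz_def)
  have "\<not> x f \<le> x j"
  proof
    assume h: "x f \<le> x j"
    then have "isoA n \<rho> x j" using fi assms(2) by auto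
    moreover have "\<forall>k\<in>{1..n}. x j \<le> x k \<longrightarrow> isoA n \<rho> x k" using fi h by force
    ultimately show False using assms(2) by (auto simp: Fz_def)
  qed
  moreover have "j \<noteq> f" using assms by auto
  then have "\<rho> < \<bar>x j - x f\<bar>" using fi assms(2) by (auto simp: isoA_def)
  ultimately show ?thesis by auto
qed

lemma R_ne:
  assumes "3 \<le> n" "1 / real (n - 1) \<le> \<rho>" "in_cube n x" "0 \<le> \<rho>"
  shows "\<exists>i\<in>{1..n}. \<exists>j\<in>{1..n}. i \<noteq> j \<and> i \<notin> Fz n \<rho> x \<and> j \<notin> Fz n \<rho> x \<and> \<bar>x i - x j\<bar> \<le> \<rho>"
proof -
  obtain i j where ij: "i\<in>{1..n}" "j\<in>{1..n}" "i \<noteq> j" "\<bar>x i - x j\<bar> \<le> \<rho>" using exists_nbr assms by blast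
  then have "\<not> isoA n \<rho> x i" "\<not> isoA n \<rho> x j" by (auto simp: isoA_def abs_minus_commute)
  then have "i \<notin> Fz n \<rho> x" "j \<notin> Fz n \<rho> x" by (auto simp: Fz_def)
  then show ?thesis using ij by blast
qed

lemma ph1_key:
  assumes r0: "0 \<le> \<rho>" and d: "0 < d" "d \<le> \<rho>" and cube: "in_cube n x"
    and w: "\<forall>i\<in>{1..n}. \<forall>j\<in>{1..n}. w j i \<le> -d"
    and x': "\<forall>i\<in>{1..n}. x' i = proj01 (inr n \<rho> x (\<lambda>j. w j i) i)"
    and P: "\<forall>r\<in>{1..n} - Fz n \<rho> x. x r \<le> P"
    and r: "r \<in> {1..n} - Fz n \<rho> x"
  shows "x' r \<le> max 0 (P - d/2)"
proof (cases "isoA n \<rho> x r")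
  case True
  have rV: "r \<in> {1..n}" using r by auto
  have "x' r = x r" using x' rV iso_nbrs[OF rV r0 True] inr_iso[OF rV r0] proj_id cube
    by (simp add: in_cube_def)
  moreover obtain j where j: "j\<in>{1..n}" "x r \<le> x j" "\<not> isoA n \<rho> x j"
    using r True by (auto simp: Fz_def)
  then have "j \<in> {1..n} - Fz n \<rho> x" by (auto simp: Fz_def)
  then have "x j \<le> P" using P by auto
  moreover have "j \<noteq> r" using j True by auto
  then have "\<rho> < \<bar>x j - x r\<bar>" using True j by (auto simp: isoA_def)
  ultimately show ?thesis using j d by auto
next
  case False
  have rV: "r \<in> {1..n}" using r by auto
  let ?N = "nbrs n (\<lambda>_. \<rho>) x r"
  have NR: "\<forall>j\<in>?N. x j \<le> P"
  proof
    fix j assume jN: "j \<in> ?N"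
    show "x j \<le> P"
    proof (cases "j = r")
      case True then show ?thesis using P r by auto
    next
      case False
      have "j \<notin> Fz n \<rho> x"
      proof
        assume "j \<in> Fz n \<rho> x"
        then have "isoA n \<rho> x j" by (auto simp: Fz_def)
        then show False using jN False rV by (auto simp: isoA_def nbrs_def abs_minus_commute)
      qed
      then show ?thesis using P jN by (auto simp: nbrs_def)
    qed
  qed
  obtain j where j: "j \<in> {1..n}" "j \<noteq> r" "\<bar>x j - x r\<bar> \<le> \<rho>" using False by (auto simp: isoA_def)
  have "{r, j} \<subseteq> ?N" using j rV r0 by (auto simp: nbrs_def)
  then have "card {r, j} \<le> card ?N" using card_mono[OF nb_fin] by blast
  then have k2: "2 \<le> card ?N" using j(2) by simp
  have up: "inr n \<rho> x (\<lambda>j. w j r) r \<le> P + (-d) * (real (card ?N) - 1) / real (card ?N)"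
    using inr_upper[OF rV r0 sum_le_max[OF nb_fin NR], of "\<lambda>j. w j r" "-d"] w rV
    by (auto simp: nbrs_def)
  have "(-d) * (real (card ?N) - 1) / real (card ?N) \<le> -d/2"
  proof -
    have k: "2 \<le> real (card ?N)" using k2 by simp
    then have "d * (real (card ?N)) \<le> 2 * (d * (real (card ?N) - 1))" using d by (simp add: algebra_simps)
    then show ?thesis using k by (simp add: field_simps)
  qed
  then have "inr n \<rho> x (\<lambda>j. w j r) r \<le> P - d/2" using up by simp
  then show ?thesis using x' rV proj_le[of "inr n \<rho> x (\<lambda>j. w j r) r"] by auto
qed

lemma ph1_step:
  assumes n3: "3 \<le> n" and rr: "1 / real (n - 1) \<le> \<rho>" and r0: "0 \<le> \<rho>"
    and d: "0 < d" "d \<le> \<rho>" and cube: "in_cube n x"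
    and w: "\<forall>i\<in>{1..n}. \<forall>j\<in>{1..n}. w j i \<le> -d"
    and x': "\<forall>i\<in>{1..n}. x' i = proj01 (inr n \<rho> x (\<lambda>j. w j i) i)"
  shows "Fz n \<rho> x \<subseteq> Fz n \<rho> x'"
proof -
  have isox: "isoA n \<rho> x' f \<and> x' f = x f" if f: "f \<in> Fz n \<rho> x" for f
  proof -
    have fV: "f \<in> {1..n}" and fi: "isoA n \<rho> x f" using f by (auto simp: Fz_def)
    have xf: "x' f = x f" using x' fV iso_nbrs[OF fV r0 fi] inr_iso[OF fV r0] proj_id cube
      by (simp add: in_cube_def)
    have Rb: "\<forall>j\<in>{1..n} - Fz n \<rho> x. x j \<le> x f - \<rho>" using Fz_below[OF f] by force
    obtain i0 where i0: "i0 \<in> {1..n} - Fz n \<rho> x" using R_ne[OF n3 rr cube r0] by blast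
    have pos: "0 < x f - \<rho>"
    proof -
      have "0 \<le> x i0" using cube i0 by (auto simp: in_cube_def)
      then show ?thesis using Fz_below[OF f i0] by linarith
    qed
    have Rj: "x' j < x f - \<rho>" if j: "j \<in> {1..n} - Fz n \<rho> x" for j
      using ph1_key[OF r0 d cube w x' Rb j] pos d by auto
    have "isoA n \<rho> x' f"
      unfolding isoA_def
    proof (intro ballI impI)
      fix j assume jV: "j \<in> {1..n}" and jf: "j \<noteq> f"
      show "\<rho> < \<bar>x' j - x' f\<bar>"
      proof (cases "j \<in> Fz n \<rho> x")
        case True
        have "x' j = x j" using x' jV True iso_nbrs[OF jV r0] inr_iso[OF jV r0] proj_id cube
          by (simp add: in_cube_def Fz_def)
        then show ?thesis using fi jV jf xf by (auto simp: isoA_def)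
      next
        case False
        then show ?thesis using Rj[of j] jV xf r0 by auto
      qed
    qed
    then show ?thesis using xf by simp
  qed
  show ?thesis
  proof
    fix f assume f: "f \<in> Fz n \<rho> x"
    have fV: "f \<in> {1..n}" using f by (auto simp: Fz_def)
    have "isoA n \<rho> x' j" if jV: "j \<in> {1..n}" and le: "x' f \<le> x' j" for j
    proof (cases "j \<in> Fz n \<rho> x")
      case True then show ?thesis using isox by blast
    next
      case False
      have Rb: "\<forall>j\<in>{1..n} - Fz n \<rho> x. x j \<le> x f - \<rho>" using Fz_below[OF f] by force
      obtain i0 where i0: "i0 \<in> {1..n} - Fz n \<rho> x" using R_ne[OF n3 rr cube r0] by blast
      have pos: "0 < x f - \<rho>"
    proof -
      have "0 \<le> x i0" using cube i0 by (auto simp: in_cube_def)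
      then show ?thesis using Fz_below[OF f i0] by linarith
    qed
      have "x' j < x f - \<rho>" using ph1_key[OF r0 d cube w x' Rb, of j] False jV pos d by auto
      then show ?thesis using le isox[OF f] r0 by auto
    qed
    then show "f \<in> Fz n \<rho> x'" using isox[OF f] fV by (auto simp: Fz_def)
  qed
qed



lemma fac1: "1 \<le> (k::real) \<Longrightarrow> 0 \<le> h \<Longrightarrow> h*(k-1)/k \<le> h"
proof -
  assume k: "1 \<le> k" and h: "0 \<le> h"
  have "h*(k-1) \<le> h*k" using h by (intro mult_left_mono) auto
  then have "h*(k-1)/k \<le> h*k/k" using k by (intro divide_right_mono) auto
  then show ?thesis using k by simp
qed
lemma fac0: "1 \<le> (k::real) \<Longrightarrow> 0 \<le> h \<Longrightarrow> 0 \<le> h*(k-1)/k"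
  by simp
lemma fac2: "2 \<le> (k::real) \<Longrightarrow> 0 \<le> h \<Longrightarrow> h/2 \<le> h*(k-1)/k"
proof -
  assume k: "2 \<le> k" and h: "0 \<le> h"
  have "h * 2 \<le> h * k" using k h by (intro mult_left_mono) auto
  then have e: "(h/2) * k \<le> h*(k-1)" by (simp add: algebra_simps)
  have "0 < k" using k by simp
  then show ?thesis using e by (simp add: le_divide_eq)
qed

lemma nb_card1: "i \<in> {1..n} \<Longrightarrow> 0 \<le> \<rho> \<Longrightarrow> 1 \<le> real (card (nbrs n (\<lambda>_. \<rho>) x i))"
proof -
  assume "i \<in> {1..n}" "0 \<le> \<rho>"
  then have "i \<in> nbrs n (\<lambda>_. \<rho>) x i" by (rule nb_self)
  then have "0 < card (nbrs n (\<lambda>_. \<rho>) x i)" using nb_fin card_gt_0_iff by blast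
  then show ?thesis by simp
qed

lemma nb_card2: "i \<in> {1..n} \<Longrightarrow> 0 \<le> \<rho> \<Longrightarrow> j \<in> {1..n} \<Longrightarrow> j \<noteq> i \<Longrightarrow> \<bar>x j - x i\<bar> \<le> \<rho>
   \<Longrightarrow> 2 \<le> real (card (nbrs n (\<lambda>_. \<rho>) x i))"
proof -
  assume a: "i \<in> {1..n}" "0 \<le> \<rho>" "j \<in> {1..n}" "j \<noteq> i" "\<bar>x j - x i\<bar> \<le> \<rho>"
  then have "{i, j} \<subseteq> nbrs n (\<lambda>_. \<rho>) x i" by (auto simp: nbrs_def)
  then have "card {i, j} \<le> card (nbrs n (\<lambda>_. \<rho>) x i)" using card_mono[OF nb_fin] by blast
  then show ?thesis using a(4) by simp
qed

lemma iso_fix: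
  assumes "i \<in> {1..n}" "0 \<le> \<rho>" "in_cube n x" "\<forall>j\<in>{1..n}. j \<noteq> i \<longrightarrow> \<rho> < \<bar>x j - x i\<bar>"
  shows "proj01 (inr n \<rho> x w i) = x i"
proof -
  have "isoA n \<rho> x i" using assms(4) by (simp add: isoA_def)
  then have "nbrs n (\<lambda>_. \<rho>) x i = {i}" using iso_nbrs assms(1,2) by blast
  then have "inr n \<rho> x w i = x i" using inr_iso[OF assms(1,2)] by simp
  then show ?thesis using assms(1,3) proj_id by (simp add: in_cube_def)
qed

lemma nb_sub: "\<forall>j\<in>{1..n} - S. \<rho> < \<bar>x j - x i\<bar> \<Longrightarrow> nbrs n (\<lambda>_. \<rho>) x i \<subseteq> S"
  unfolding nbrs_def by force

lemma nb_eq: "S \<subseteq> {1..n} \<Longrightarrow> \<forall>j\<in>S. \<bar>x j - x i\<bar> \<le> \<rho> \<Longrightarrow> \<forall>j\<in>{1..n} - S. \<rho> < \<bar>x j - x i\<bar>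
    \<Longrightarrow> nbrs n (\<lambda>_. \<rho>) x i = S"
  unfolding nbrs_def by force

definition allnb :: "nat \<Rightarrow> real \<Rightarrow> (nat\<Rightarrow>real) \<Rightarrow> bool" where
  "allnb n \<rho> x \<longleftrightarrow> (\<forall>i\<in>{1..n}. \<forall>j\<in>{1..n}. \<bar>x i - x j\<bar> \<le> \<rho>)"

definition Inv :: "nat \<Rightarrow> real \<Rightarrow> real \<Rightarrow> (nat\<Rightarrow>real) \<Rightarrow> nat set \<Rightarrow> bool" where
 "Inv n \<rho> d x G \<longleftrightarrow> G \<subseteq> {1..n} \<and> 2 \<le> card G \<and>
   (\<forall>f\<in>{1..n}-G. \<forall>g\<in>G. x g + \<rho> - 4*d < x f) \<and>
   (\<forall>f\<in>{1..n}-G. \<forall>f'\<in>{1..n}-G. f \<noteq> f' \<longrightarrow> \<rho> < \<bar>x f - x f'\<bar>) \<and>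
   (\<forall>g\<in>G. \<forall>g'\<in>G. \<bar>x g - x g'\<bar> \<le> \<rho>) \<and>
   ((\<forall>g\<in>G. \<forall>g'\<in>G. \<bar>x g - x g'\<bar> \<le> 3*d) \<or> (\<forall>f\<in>{1..n}-G. \<forall>g\<in>G. x g + \<rho> + 4*d < x f))"


lemma sum_split_bound:
  assumes "finite N" "\<forall>j\<in>N-{f}. x j \<le> M" "M \<le> x f" "\<exists>j\<in>N. j \<noteq> f"
  shows "(\<Sum>j\<in>N. x j) \<le> real (card N) * ((M + x f)/2)"
proof (cases "f \<in> N")
  case True
  let ?k = "real (card N)"
  have k2: "2 \<le> ?k"
  proof -
    obtain j where "j \<in> N" "j \<noteq> f" using assms(4) by blast
    then have "{f, j} \<subseteq> N" using True by auto
    then have "card {f, j} \<le> card N" using card_mono[OF assms(1)] by blast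
    then show ?thesis using \<open>j \<noteq> f\<close> by simp
  qed
  have "(\<Sum>j\<in>N. x j) = x f + (\<Sum>j\<in>N-{f}. x j)" using sum.remove[OF assms(1) True] by simp
  also have "(\<Sum>j\<in>N-{f}. x j) \<le> real (card (N - {f})) * M" using sum_le_max[of "N-{f}" x M] assms by simp
  also have "real (card (N - {f})) = ?k - 1" using True assms(1) k2 by (simp add: card_Diff_singleton of_nat_diff)
  finally have s: "(\<Sum>j\<in>N. x j) \<le> x f + (?k - 1) * M" by simp
  have "(?k - 2) * M \<le> (?k - 2) * x f" using k2 assms(3) by (intro mult_left_mono) auto
  then have "x f + (?k - 1) * M \<le> ?k * ((M + x f)/2)" by (simp add: algebra_simps)
  then show ?thesis using s by linarith
next
  case False
  then have "\<forall>j\<in>N. x j \<le> M" using assms(2) by auto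
  then have "(\<Sum>j\<in>N. x j) \<le> real (card N) * M" using sum_le_max assms(1) by blast
  also have "\<dots> \<le> real (card N) * ((M + x f)/2)" using assms(3) by (intro mult_left_mono) auto
  finally show ?thesis .
qed



lemma ph2_step:
  assumes r0: "0 \<le> \<rho>" and d: "0 < d" "30*d \<le> \<rho>"
    and inv: "Inv n \<rho> d x G" and cube: "in_cube n x"
    and w: "\<forall>i\<in>{1..n}. \<forall>j\<in>{1..n}. d \<le> w j i \<and> w j i \<le> 3*d"
    and x': "\<forall>i\<in>{1..n}. x' i = proj01 (inr n \<rho> x (\<lambda>j. w j i) i)"
    and mu: "\<forall>g\<in>G. \<mu> \<le> x g"
  shows "\<exists>G'. Inv n \<rho> d x' G' \<and> (\<forall>g\<in>G'. min 1 (\<mu> + d/2) \<le> x' g)"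
proof -
  let ?V = "{1..n::nat}"
  have GV: "G \<subseteq> ?V" and cG: "2 \<le> card G"
    and ia: "\<forall>f\<in>?V-G. \<forall>g\<in>G. x g + \<rho> - 4*d < x f"
    and ib: "\<forall>f\<in>?V-G. \<forall>f'\<in>?V-G. f \<noteq> f' \<longrightarrow> \<rho> < \<bar>x f - x f'\<bar>"
    and ic: "\<forall>g\<in>G. \<forall>g'\<in>G. \<bar>x g - x g'\<bar> \<le> \<rho>"
    and idd: "(\<forall>g\<in>G. \<forall>g'\<in>G. \<bar>x g - x g'\<bar> \<le> 3*d) \<or> (\<forall>f\<in>?V-G. \<forall>g\<in>G. x g + \<rho> + 4*d < x f)"
    using inv unfolding Inv_def by blast+
  have finG: "finite G" using GV finite_subset by blast
  have cube': "\<forall>i\<in>?V. 0 \<le> x i \<and> x i \<le> 1" using cube by (simp add: in_cube_def)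
  have wl: "\<forall>i\<in>?V. \<forall>j\<in>nbrs n (\<lambda>_. \<rho>) x i - {i}. d \<le> w j i" using w by (auto simp: nbrs_def)
  have wu: "\<forall>i\<in>?V. \<forall>j\<in>nbrs n (\<lambda>_. \<rho>) x i - {i}. w j i \<le> 3*d" using w by (auto simp: nbrs_def)
  show ?thesis
  proof (cases "\<exists>f\<in>?V-G. \<exists>g\<in>G. \<bar>x f - x g\<bar> \<le> \<rho>")
    case False
    then have nn: "\<forall>f\<in>?V-G. \<forall>g\<in>G. \<rho> < \<bar>x f - x g\<bar>" by (meson not_le)
    have above: "\<forall>f\<in>?V-G. \<forall>g\<in>G. x g + \<rho> < x f"
    proof (intro ballI)
      fix f g assume "f \<in> ?V-G" "g \<in> G"
      then have "\<rho> < \<bar>x f - x g\<bar>" "x g + \<rho> - 4*d < x f" using nn ia by blast+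
      then show "x g + \<rho> < x f" using d by linarith
    qed
    have NG: "nbrs n (\<lambda>_. \<rho>) x g = G" if g: "g \<in> G" for g
    proof (rule nb_eq[OF GV])
      show "\<forall>j\<in>G. \<bar>x j - x g\<bar> \<le> \<rho>" using ic g by blast
      show "\<forall>j\<in>?V - G. \<rho> < \<bar>x j - x g\<bar>" using nn g by blast
    qed
    have Ffix: "x' f = x f" if f: "f \<in> ?V - G" for f
    proof -
      have "\<forall>j\<in>?V. j \<noteq> f \<longrightarrow> \<rho> < \<bar>x j - x f\<bar>"
      proof (intro ballI impI)
        fix j assume j: "j \<in> ?V" "j \<noteq> f"
        show "\<rho> < \<bar>x j - x f\<bar>"
        proof (cases "j \<in> G")
          case True then show ?thesis using nn f by (simp add: abs_minus_commute)
        next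
          case False then show ?thesis using ib f j by blast
        qed
      qed
      then show ?thesis using x' f iso_fix[OF _ r0 cube] by auto
    qed
    let ?k = "real (card G)"
    let ?S = "\<Sum>j\<in>G. x j"
    have k2: "2 \<le> ?k" using cG by simp
    have bnd: "?S/?k + d*(?k-1)/?k \<le> inr n \<rho> x (\<lambda>j. w j g) g \<and> inr n \<rho> x (\<lambda>j. w j g) g \<le> ?S/?k + 3*(d*(?k-1)/?k)
       \<and> \<mu> + d/2 \<le> inr n \<rho> x (\<lambda>j. w j g) g
       \<and> (\<forall>f\<in>?V-G. inr n \<rho> x (\<lambda>j. w j g) g \<le> x f - \<rho> + 3*d)" if g: "g \<in> G" for g
    proof -
      have gV: "g \<in> ?V" using g GV by auto
      have Sk: "?k * (?S/?k) = ?S" using k2 by simp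
      have l1: "?S/?k + d*(?k-1)/?k \<le> inr n \<rho> x (\<lambda>j. w j g) g"
        using inr_lower[OF gV r0, of x "?S/?k" d "\<lambda>j. w j g"] NG[OF g] Sk wl gV by simp
      have u1: "inr n \<rho> x (\<lambda>j. w j g) g \<le> ?S/?k + (3*d)*(?k-1)/?k"
        using inr_upper[OF gV r0, of x "?S/?k" "\<lambda>j. w j g" "3*d"] NG[OF g] Sk wu gV by simp
      have l2: "\<mu> + d*(?k-1)/?k \<le> inr n \<rho> x (\<lambda>j. w j g) g"
        using inr_lower[OF gV r0, of x \<mu> d "\<lambda>j. w j g"] NG[OF g] sum_ge_min[OF finG, of \<mu> x] mu wl gV by simp
      have "d/2 \<le> d*(?k-1)/?k" using fac2[OF k2] d by simp
      moreover have u2: "\<forall>f\<in>?V-G. inr n \<rho> x (\<lambda>j. w j g) g \<le> x f - \<rho> + 3*d"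
      proof
        fix f assume f: "f \<in> ?V - G"
        have "\<forall>j\<in>G. x j \<le> x f - \<rho>"
        proof
          fix j assume "j \<in> G"
          then have "x j + \<rho> < x f" using above f by blast
          then show "x j \<le> x f - \<rho>" by linarith
        qed
        then have "inr n \<rho> x (\<lambda>j. w j g) g \<le> (x f - \<rho>) + (3*d)*(?k-1)/?k"
          using inr_upper[OF gV r0, of x "x f - \<rho>" "\<lambda>j. w j g" "3*d"] NG[OF g] sum_le_max[OF finG] wu gV by simp
        moreover have "(3*d)*(?k-1)/?k \<le> 3*d" using fac1 k2 d by simp
        ultimately show "inr n \<rho> x (\<lambda>j. w j g) g \<le> x f - \<rho> + 3*d" by linarith
      qed
      moreover have "(3*d)*(?k-1)/?k = 3*(d*(?k-1)/?k)" by simp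
      ultimately show ?thesis using l1 u1 l2 by linarith
    qed
    have t1: "d*(?k-1)/?k \<le> d" using fac1 k2 d by simp
    have Inv': "Inv n \<rho> d x' G"
      unfolding Inv_def
    proof (intro conjI)
      show "G \<subseteq> ?V" by fact
      show "2 \<le> card G" by fact
      show "\<forall>f\<in>?V-G. \<forall>g\<in>G. x' g + \<rho> - 4*d < x' f"
      proof (intro ballI)
        fix f g assume f: "f \<in> ?V-G" and g: "g \<in> G"
        have gV: "g \<in> ?V" using g GV by auto
        have "x' g \<le> max 0 (inr n \<rho> x (\<lambda>j. w j g) g)" using x' gV proj_le by simp
        moreover have "inr n \<rho> x (\<lambda>j. w j g) g \<le> x f - \<rho> + 3*d" using bnd[OF g] f by blast
        moreover have "0 \<le> x g" using cube' gV by blast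
        moreover have "x g + \<rho> < x f" using above f g by blast
        ultimately show "x' g + \<rho> - 4*d < x' f" using Ffix[OF f] d by (simp add: max_def split: if_splits)
      qed
      show "\<forall>f\<in>?V-G. \<forall>f'\<in>?V-G. f \<noteq> f' \<longrightarrow> \<rho> < \<bar>x' f - x' f'\<bar>" using ib Ffix by simp
      have tight: "\<forall>g\<in>G. \<forall>g'\<in>G. \<bar>x' g - x' g'\<bar> \<le> 3*d"
      proof (intro ballI)
        fix g g' assume g: "g \<in> G" and g': "g' \<in> G"
        have "\<bar>x' g - x' g'\<bar> \<le> \<bar>inr n \<rho> x (\<lambda>j. w j g) g - inr n \<rho> x (\<lambda>j. w j g') g'\<bar>"
          using x' g g' GV proj_lip by (metis subsetD)
        also have "\<dots> \<le> 3*d" using bnd[OF g] bnd[OF g'] t1 d by (simp add: abs_le_iff)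
        finally show "\<bar>x' g - x' g'\<bar> \<le> 3*d" .
      qed
      then show "\<forall>g\<in>G. \<forall>g'\<in>G. \<bar>x' g - x' g'\<bar> \<le> \<rho>" using d by fastforce
      show "(\<forall>g\<in>G. \<forall>g'\<in>G. \<bar>x' g - x' g'\<bar> \<le> 3*d) \<or> (\<forall>f\<in>?V-G. \<forall>g\<in>G. x' g + \<rho> + 4*d < x' f)"
        using tight by blast
    qed
    moreover have "\<forall>g\<in>G. min 1 (\<mu> + d/2) \<le> x' g"
    proof
      fix g assume g: "g \<in> G"
      have gV: "g \<in> ?V" using g GV by auto
      have "min 1 (inr n \<rho> x (\<lambda>j. w j g) g) \<le> x' g" using x' gV proj_ge by simp
      then show "min 1 (\<mu> + d/2) \<le> x' g" using bnd[OF g] by linarith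
    qed
    ultimately show ?thesis by blast
  next
    case True
    then obtain f1 g0 where f1: "f1 \<in> ?V - G" and g0: "g0 \<in> G" and fg: "\<bar>x f1 - x g0\<bar> \<le> \<rho>" by blast
    have tight: "\<forall>g\<in>G. \<forall>g'\<in>G. \<bar>x g - x g'\<bar> \<le> 3*d"
    proof -
      have "\<not> (x g0 + \<rho> + 4*d < x f1)" using fg d by linarith
      then show ?thesis using idd f1 g0 by blast
    qed
    have f1up: "x f1 \<le> x g0 + \<rho>" using fg by linarith
    have f1low: "\<forall>g\<in>G. x g + \<rho> - 4*d < x f1" using ia f1 by blast
    have oth: "\<forall>g\<in>G. x g + \<rho> < x f \<and> \<rho> < \<bar>x f - x g\<bar>" and oth2: "x f1 + \<rho> < x f"
      if f: "f \<in> ?V - G - {f1}" for f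
    proof -
      have fnot: "\<rho> < \<bar>x f - x g\<bar>" if g: "g \<in> G" for g
      proof (rule ccontr)
        assume "\<not> \<rho> < \<bar>x f - x g\<bar>"
        then have "x f \<le> x g + \<rho>" by linarith
        moreover have "\<bar>x g - x g0\<bar> \<le> 3*d" using tight g g0 by blast
        moreover have "x g0 + \<rho> - 4*d < x f" using ia f g0 by blast
        moreover have "x g0 + \<rho> - 4*d < x f1" using f1low g0 by blast
        ultimately have "\<bar>x f - x f1\<bar> < 7*d" using f1up by (simp add: abs_less_iff abs_le_iff)
        moreover have "\<rho> < \<bar>x f - x f1\<bar>" using ib f f1 by blast
        ultimately show False using d by linarith
      qed
      show "\<forall>g\<in>G. x g + \<rho> < x f \<and> \<rho> < \<bar>x f - x g\<bar>"
      proof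
        fix g assume g: "g \<in> G"
        have "x g + \<rho> - 4*d < x f" using ia f g by blast
        then show "x g + \<rho> < x f \<and> \<rho> < \<bar>x f - x g\<bar>" using fnot[OF g] d by linarith
      qed
      then have "x g0 + \<rho> < x f" using g0 by blast
      then have "x f1 < x f" using f1up by linarith
      moreover have "\<rho> < \<bar>x f - x f1\<bar>" using ib f f1 by blast
      ultimately show "x f1 + \<rho> < x f" by linarith
    qed
    let ?G' = "insert f1 G"
    define M where "M = x g0 + 3*d"
    have GM: "\<forall>j\<in>G. x j \<le> M" using tight g0 unfolding M_def by (fastforce simp: abs_le_iff)
    have Gl: "\<forall>j\<in>G. x g0 - 3*d \<le> x j" using tight g0 by (fastforce simp: abs_le_iff)
    have Mf1: "M \<le> x f1" using f1low g0 d unfolding M_def by fastforce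
    have f1g0: "x g0 \<le> x f1" using f1low g0 d by fastforce
    have G'V: "?G' \<subseteq> ?V" using GV f1 by auto
    have Nsub: "nbrs n (\<lambda>_. \<rho>) x i \<subseteq> ?G'" if i: "i \<in> ?G'" for i
    proof (rule nb_sub, intro ballI)
      fix j assume j: "j \<in> ?V - ?G'"
      then have jf: "j \<in> ?V - G - {f1}" by auto
      show "\<rho> < \<bar>x j - x i\<bar>"
      proof (cases "i = f1")
        case True then show ?thesis using oth2[OF jf] by simp
      next
        case False then have "i \<in> G" using i by auto
        then show ?thesis using oth[OF jf] by blast
      qed
    qed
    have bnd: "x g0 - 3*d \<le> inr n \<rho> x (\<lambda>j. w j i) i \<and> \<mu> + d/2 \<le> inr n \<rho> x (\<lambda>j. w j i) i
        \<and> inr n \<rho> x (\<lambda>j. w j i) i \<le> (M + x f1)/2 + 3*d" if i: "i \<in> ?G'" for i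
    proof -
      let ?N = "nbrs n (\<lambda>_. \<rho>) x i"
      let ?k = "real (card ?N)"
      have iV: "i \<in> ?V" using i G'V by auto
      have k1: "1 \<le> ?k" using nb_card1[OF iV r0] .
      obtain j where j: "j \<in> ?N" "j \<noteq> f1" "j \<noteq> i \<or> i \<noteq> f1" and jG: "j \<in> G"
      proof (cases "i = f1")
        case True
        have "g0 \<in> ?N" using g0 GV fg True by (auto simp: nbrs_def abs_minus_commute)
        then show ?thesis using that[of g0] g0 f1 True by auto
      next
        case False
        then have "i \<in> G" using i by auto
        then show ?thesis using that[of i] nb_self[OF iV r0] False f1 by auto
      qed
      have k2: "2 \<le> ?k"
      proof (cases "i = f1")
        case True
        have "g0 \<in> ?V" "g0 \<noteq> i" "\<bar>x g0 - x i\<bar> \<le> \<rho>" using g0 GV f1 fg True by (auto simp: abs_minus_commute)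
        then show ?thesis using nb_card2[OF iV r0, of g0 x] by blast
      next
        case False
        then have iG: "i \<in> G" using i by auto
        have "card {i} < card G" using cG by simp
        then obtain g' where "g' \<in> G" "g' \<noteq> i" by (metis card_mono card_subset_eq finite.emptyI finite_insert insert_subset iG finG le_less not_le singletonI subsetI)
        then show ?thesis using nb_card2[OF iV r0, of g' x] ic iG GV by auto
      qed
      have vals: "\<forall>j\<in>?N. \<mu> \<le> x j \<and> x g0 - 3*d \<le> x j" 
      proof
        fix j assume "j \<in> ?N"
        then have "j \<in> ?G'" using Nsub[OF i] by blast
        then show "\<mu> \<le> x j \<and> x g0 - 3*d \<le> x j"
          using mu Gl f1g0 mu g0 d by fastforce
      qed
      have s1: "?k * \<mu> \<le> (\<Sum>j\<in>?N. x j)" by (rule sum_ge_min[OF nb_fin]) (use vals in blast)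
      have s2: "?k * (x g0 - 3*d) \<le> (\<Sum>j\<in>?N. x j)" by (rule sum_ge_min[OF nb_fin]) (use vals in blast)
      have l1: "\<mu> + d*(?k-1)/?k \<le> inr n \<rho> x (\<lambda>j. w j i) i"
        using inr_lower[OF iV r0 s1, of d "\<lambda>j. w j i"] wl iV by simp
      have l2: "(x g0 - 3*d) + d*(?k-1)/?k \<le> inr n \<rho> x (\<lambda>j. w j i) i"
        using inr_lower[OF iV r0 s2, of d "\<lambda>j. w j i"] wl iV by simp
      have sb: "(\<Sum>j\<in>?N. x j) \<le> ?k * ((M + x f1)/2)"
      proof (rule sum_split_bound[where f=f1 and M=M])
        show "finite ?N" by (rule nb_fin)
        show "M \<le> x f1" by (rule Mf1)
        show "\<forall>j\<in>?N - {f1}. x j \<le> M" using Nsub[OF i] GM by blast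
        show "\<exists>j\<in>?N. j \<noteq> f1" using j by blast
      qed
      have u1: "inr n \<rho> x (\<lambda>j. w j i) i \<le> (M + x f1)/2 + (3*d)*(?k-1)/?k"
        using inr_upper[OF iV r0 sb, of "\<lambda>j. w j i" "3*d"] wu iV by simp
      have "(3*d)*(?k-1)/?k \<le> 3*d" using fac1 k1 d by simp
      moreover have "d/2 \<le> d*(?k-1)/?k" using fac2[OF k2] d by simp
      moreover have "0 \<le> d*(?k-1)/?k" using fac0 k1 d by simp
      ultimately show ?thesis using l1 l2 u1 by linarith
    qed
    have Ffix: "x' f = x f" if f: "f \<in> ?V - ?G'" for f
    proof -
      have jf: "f \<in> ?V - G - {f1}" using f by auto
      have "\<forall>j\<in>?V. j \<noteq> f \<longrightarrow> \<rho> < \<bar>x j - x f\<bar>"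
      proof (intro ballI impI)
        fix j assume j: "j \<in> ?V" "j \<noteq> f"
        show "\<rho> < \<bar>x j - x f\<bar>"
        proof (cases "j \<in> ?G'")
          case True
          show ?thesis
          proof (cases "j = f1")
            case True then show ?thesis using oth2[OF jf] by simp
          next
            case False then have "j \<in> G" using \<open>j \<in> ?G'\<close> by auto
            then show ?thesis using oth[OF jf] by (metis abs_minus_commute)
          qed
        next
          case False then show ?thesis using ib f j by auto
        qed
      qed
      then show ?thesis using x' f iso_fix[OF _ r0 cube] by auto
    qed
    have far: "\<forall>f\<in>?V-?G'. \<forall>i\<in>?G'. x' i + \<rho> + 4*d < x' f"
    proof (intro ballI)
      fix f i assume f: "f \<in> ?V - ?G'" and i: "i \<in> ?G'"
      have jf: "f \<in> ?V - G - {f1}" using f by auto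
      have iV: "i \<in> ?V" using i G'V by auto
      have "x' i \<le> max 0 (inr n \<rho> x (\<lambda>j. w j i) i)" using x' iV proj_le by simp
      moreover have "inr n \<rho> x (\<lambda>j. w j i) i \<le> (M + x f1)/2 + 3*d" using bnd[OF i] by blast
      moreover have "x f1 + \<rho> < x f" using oth2[OF jf] .
      moreover have "x g0 + \<rho> - 4*d < x f1" using f1low g0 by blast
      moreover have "0 \<le> x g0" using cube' g0 GV by blast
      ultimately have "x' i \<le> 0 \<or> x' i \<le> (M + x f1)/2 + 3*d" "x f1 + \<rho> < x f"
        "x g0 + \<rho> - 4*d < x f1" "0 \<le> x g0" by (auto simp: max_def split: if_splits)
      then show "x' i + \<rho> + 4*d < x' f" using Ffix[OF f] d unfolding M_def by argo
    qed
    have Inv': "Inv n \<rho> d x' ?G'"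
      unfolding Inv_def
    proof (intro conjI)
      show "?G' \<subseteq> ?V" by fact
      show "2 \<le> card ?G'" using cG card_insert_le[of G f1] by linarith
      show "\<forall>f\<in>?V-?G'. \<forall>g\<in>?G'. x' g + \<rho> - 4*d < x' f"
      proof (intro ballI)
        fix f g assume "f \<in> ?V-?G'" "g \<in> ?G'"
        then have "x' g + \<rho> + 4*d < x' f" using far by blast
        then show "x' g + \<rho> - 4*d < x' f" using d by linarith
      qed
      show "\<forall>f\<in>?V-?G'. \<forall>f'\<in>?V-?G'. f \<noteq> f' \<longrightarrow> \<rho> < \<bar>x' f - x' f'\<bar>" using ib Ffix by simp
      show "\<forall>g\<in>?G'. \<forall>g'\<in>?G'. \<bar>x' g - x' g'\<bar> \<le> \<rho>"
      proof (intro ballI)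
        fix g g' assume g: "g \<in> ?G'" and g': "g' \<in> ?G'"
        have "\<bar>x' g - x' g'\<bar> \<le> \<bar>inr n \<rho> x (\<lambda>j. w j g) g - inr n \<rho> x (\<lambda>j. w j g') g'\<bar>"
          using x' g g' G'V proj_lip by (metis subsetD)
        also have "\<dots> \<le> \<rho>"
        proof -
          have a: "x g0 - 3*d \<le> inr n \<rho> x (\<lambda>j. w j g) g" "inr n \<rho> x (\<lambda>j. w j g) g \<le> (M + x f1)/2 + 3*d"
             "x g0 - 3*d \<le> inr n \<rho> x (\<lambda>j. w j g') g'" "inr n \<rho> x (\<lambda>j. w j g') g' \<le> (M + x f1)/2 + 3*d"
            using bnd[OF g] bnd[OF g'] by blast+
          have h1: "inr n \<rho> x (\<lambda>j. w j g) g - inr n \<rho> x (\<lambda>j. w j g') g' \<le> \<rho>" using a f1up d unfolding M_def by (simp add: field_simps)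
          have h2: "inr n \<rho> x (\<lambda>j. w j g') g' - inr n \<rho> x (\<lambda>j. w j g) g \<le> \<rho>" using a f1up d unfolding M_def by (simp add: field_simps)
          show ?thesis using h1 h2 by (simp add: abs_le_iff)
        qed
        finally show "\<bar>x' g - x' g'\<bar> \<le> \<rho>" .
      qed
      show "(\<forall>g\<in>?G'. \<forall>g'\<in>?G'. \<bar>x' g - x' g'\<bar> \<le> 3*d) \<or> (\<forall>f\<in>?V-?G'. \<forall>g\<in>?G'. x' g + \<rho> + 4*d < x' f)"
        using far by blast
    qed
    moreover have "\<forall>g\<in>?G'. min 1 (\<mu> + d/2) \<le> x' g"
    proof
      fix g assume g: "g \<in> ?G'"
      have gV: "g \<in> ?V" using g G'V by auto
      have "min 1 (inr n \<rho> x (\<lambda>j. w j g) g) \<le> x' g" using x' gV proj_ge by simp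
      then show "min 1 (\<mu> + d/2) \<le> x' g" using bnd[OF g] by linarith
    qed
    ultimately show ?thesis by blast
  qed
qed



definition mean :: "nat \<Rightarrow> (nat\<Rightarrow>real) \<Rightarrow> real" where
  "mean n x = (\<Sum>i\<in>{1..n}. x i) / real n"

lemma mean_bounds:
  assumes "1 \<le> n" "\<forall>i\<in>{1..n}. a \<le> y i \<and> y i \<le> b"
  shows "a \<le> mean n y \<and> mean n y \<le> b"
proof -
  have np: "0 < real n" using assms(1) by simp
  have s1: "(\<Sum>i\<in>{1..n}. y i) \<le> real n * b" using sum_le_max[of "{1..n}" y b] assms(2) by simp
  have s2: "real n * a \<le> (\<Sum>i\<in>{1..n}. y i)" using sum_ge_min[of "{1..n}" a y] assms(2) by simp
  show ?thesis unfolding mean_def using s1 s2 np by (simp add: divide_le_eq le_divide_eq mult.commute)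
qed

lemma allnb_nb: "allnb n \<rho> x \<Longrightarrow> i \<in> {1..n} \<Longrightarrow> nbrs n (\<lambda>_. \<rho>) x i = {1..n}"
  by (rule nb_eq) (auto simp: allnb_def)

lemma fin_inr:
  assumes n2: "2 \<le> n" and r0: "0 \<le> \<rho>" and an: "allnb n \<rho> x" and i: "i \<in> {1..n}"
    and w: "\<forall>j\<in>{1..n}. lo \<le> w j \<and> w j \<le> hi"
  shows "mean n x + lo*(real n - 1)/real n \<le> inr n \<rho> x w i \<and> inr n \<rho> x w i \<le> mean n x + hi*(real n - 1)/real n"
proof -
  have N: "nbrs n (\<lambda>_. \<rho>) x i = {1..n}" using allnb_nb[OF an i] .
  have np: "0 < real n" using n2 by simp
  have S: "real n * mean n x = (\<Sum>j\<in>{1..n}. x j)" unfolding mean_def using np by simp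
  have u: "inr n \<rho> x w i \<le> mean n x + hi*(real n - 1)/real n"
    using inr_upper[OF i r0, of x "mean n x" w hi] N S w by simp
  have l: "mean n x + lo*(real n - 1)/real n \<le> inr n \<rho> x w i"
    using inr_lower[OF i r0, of x "mean n x" lo w] N S w by simp
  show ?thesis using u l by simp
qed

lemma fin_up:
  assumes n2: "2 \<le> n" and r0: "0 \<le> \<rho>" and d: "0 < d" "3*d \<le> \<rho>" and an: "allnb n \<rho> x"
    and m: "0 \<le> mean n x" "mean n x + 3*d \<le> 1"
    and w: "\<forall>i\<in>{1..n}. \<forall>j\<in>{1..n}. d \<le> w j i \<and> w j i \<le> 3*d"
    and x': "\<forall>i\<in>{1..n}. x' i = proj01 (inr n \<rho> x (\<lambda>j. w j i) i)"
  shows "allnb n \<rho> x' \<and> mean n x + d/2 \<le> mean n x' \<and> mean n x' \<le> mean n x + 3*d"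
proof -
  have k2: "2 \<le> real n" using n2 by simp
  have f2: "d/2 \<le> d*(real n - 1)/real n" using fac2[OF k2] d by simp
  have f1: "(3*d)*(real n - 1)/real n \<le> 3*d" using fac1 k2 d by simp
  have b: "mean n x + d/2 \<le> x' i \<and> x' i \<le> mean n x + 3*d" if i: "i \<in> {1..n}" for i
  proof -
    have "mean n x + d*(real n - 1)/real n \<le> inr n \<rho> x (\<lambda>j. w j i) i \<and> inr n \<rho> x (\<lambda>j. w j i) i \<le> mean n x + (3*d)*(real n - 1)/real n"
      using fin_inr[OF n2 r0 an i, of d "\<lambda>j. w j i" "3*d"] w i by blast
    then have "mean n x + d/2 \<le> inr n \<rho> x (\<lambda>j. w j i) i \<and> inr n \<rho> x (\<lambda>j. w j i) i \<le> mean n x + 3*d"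
      using f1 f2 by linarith
    moreover then have "x' i = inr n \<rho> x (\<lambda>j. w j i) i" using x' i proj_id m d by auto
    ultimately show ?thesis by simp
  qed
  have "allnb n \<rho> x'" unfolding allnb_def
  proof (intro ballI)
    fix i j assume "i \<in> {1..n}" "j \<in> {1..n}"
    then have "mean n x + d/2 \<le> x' i" "x' i \<le> mean n x + 3*d" "mean n x + d/2 \<le> x' j" "x' j \<le> mean n x + 3*d" using b by blast+
    then show "\<bar>x' i - x' j\<bar> \<le> \<rho>" using d by (simp add: abs_le_iff)
  qed
  moreover have "mean n x + d/2 \<le> mean n x' \<and> mean n x' \<le> mean n x + 3*d"
    using mean_bounds[of n "mean n x + d/2" x' "mean n x + 3*d"] b n2 by simp
  ultimately show ?thesis by simp
qed

lemma fin_down: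
  assumes n2: "2 \<le> n" and r0: "0 \<le> \<rho>" and d: "0 < d" "3*d \<le> \<rho>" and an: "allnb n \<rho> x"
    and m: "3*d \<le> mean n x" "mean n x \<le> 1"
    and w: "\<forall>i\<in>{1..n}. \<forall>j\<in>{1..n}. -3*d \<le> w j i \<and> w j i \<le> -d"
    and x': "\<forall>i\<in>{1..n}. x' i = proj01 (inr n \<rho> x (\<lambda>j. w j i) i)"
  shows "allnb n \<rho> x' \<and> mean n x - 3*d \<le> mean n x' \<and> mean n x' \<le> mean n x - d/2"
proof -
  have k2: "2 \<le> real n" using n2 by simp
  have f2: "d/2 \<le> d*(real n - 1)/real n" using fac2[OF k2] d by simp
  have f1: "(3*d)*(real n - 1)/real n \<le> 3*d" using fac1 k2 d by simp
  have b: "mean n x - 3*d \<le> x' i \<and> x' i \<le> mean n x - d/2" if i: "i \<in> {1..n}" for i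
  proof -
    have "mean n x + (-3*d)*(real n - 1)/real n \<le> inr n \<rho> x (\<lambda>j. w j i) i \<and> inr n \<rho> x (\<lambda>j. w j i) i \<le> mean n x + (-d)*(real n - 1)/real n"
      using fin_inr[OF n2 r0 an i, of "-3*d" "\<lambda>j. w j i" "-d"] w i by blast
    moreover have "(-3*d)*(real n - 1)/real n = - ((3*d)*(real n - 1)/real n)" by simp
    moreover have "(-d)*(real n - 1)/real n = - (d*(real n - 1)/real n)" by simp
    ultimately have "mean n x - 3*d \<le> inr n \<rho> x (\<lambda>j. w j i) i \<and> inr n \<rho> x (\<lambda>j. w j i) i \<le> mean n x - d/2"
      using f1 f2 by linarith
    moreover then have "x' i = inr n \<rho> x (\<lambda>j. w j i) i" using x' i proj_id m d by auto
    ultimately show ?thesis by simp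
  qed
  have "allnb n \<rho> x'" unfolding allnb_def
  proof (intro ballI)
    fix i j assume "i \<in> {1..n}" "j \<in> {1..n}"
    then have "mean n x - 3*d \<le> x' i" "x' i \<le> mean n x - d/2" "mean n x - 3*d \<le> x' j" "x' j \<le> mean n x - d/2" using b by blast+
    then show "\<bar>x' i - x' j\<bar> \<le> \<rho>" using d by (simp add: abs_le_iff)
  qed
  moreover have "mean n x - 3*d \<le> mean n x' \<and> mean n x' \<le> mean n x - d/2"
    using mean_bounds[of n "mean n x - 3*d" x' "mean n x - d/2"] b n2 by simp
  ultimately show ?thesis by simp
qed

lemma Max_pairs:
  assumes "1 \<le> n"
  shows "finite {\<bar>x i - x j\<bar> | i j. i \<in> {1..n} \<and> j \<in> {1..(n::nat)}}"
    and "{\<bar>x i - x j\<bar> | i j. i \<in> {1..n} \<and> j \<in> {1..(n::nat)}} \<noteq> {}"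
proof -
  have e: "{\<bar>x i - x j\<bar> | i j. i \<in> {1..n} \<and> j \<in> {1..n}} = (\<lambda>(i,j). \<bar>x i - x j\<bar>) ` ({1..n} \<times> {1..n})"
    by (auto; blast)
  show "finite {\<bar>x i - x j\<bar> | i j. i \<in> {1..n} \<and> j \<in> {1..(n::nat)}}" unfolding e by simp
  show "{\<bar>x i - x j\<bar> | i j. i \<in> {1..n} \<and> j \<in> {1..(n::nat)}} \<noteq> {}" using assms by auto
qed

lemma fin_spread:
  assumes n3: "3 \<le> n" and r0: "0 \<le> \<rho>" and an: "allnb n \<rho> x"
    and c: "c = 2*\<eta>*real (n-1)/real n" "c < 1" and d: "0 \<le> d" "4*d \<le> \<epsilon>"
    and m: "c/2 \<le> mean n x" "mean n x \<le> 1 - c/2"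
    and w: "\<forall>i\<in>{1..n}. \<forall>j\<in>{1..n}. -\<eta> \<le> w j i \<and> w j i \<le> \<eta>"
    and w1: "\<forall>j\<in>{1..n}. \<eta> - 2*d \<le> w j 1"
    and w2: "\<forall>j\<in>{1..n}. w j 2 \<le> -\<eta> + 2*d"
    and x': "\<forall>i\<in>{1..n}. x' i = proj01 (inr n \<rho> x (\<lambda>j. w j i) i)"
  shows "x' \<in> E'_set n c \<epsilon>"
proof -
  have n2: "2 \<le> n" using n3 by simp
  have k2: "2 \<le> real n" using n2 by simp
  have np: "0 < real n" using n2 by simp
  have ceq: "\<eta>*(real n - 1)/real n = c/2" using c(1) n3 by (simp add: of_nat_diff)
  have d2: "(2*d)*(real n - 1)/real n \<le> 2*d" using fac1 k2 d by simp
  have all: "mean n x - c/2 \<le> inr n \<rho> x (\<lambda>j. w j i) i \<and> inr n \<rho> x (\<lambda>j. w j i) i \<le> mean n x + c/2"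
    if i: "i \<in> {1..n}" for i
  proof -
    have "mean n x + (-\<eta>)*(real n - 1)/real n \<le> inr n \<rho> x (\<lambda>j. w j i) i \<and> inr n \<rho> x (\<lambda>j. w j i) i \<le> mean n x + \<eta>*(real n - 1)/real n"
      using fin_inr[OF n2 r0 an i, of "-\<eta>" "\<lambda>j. w j i" \<eta>] w i by blast
    moreover have "(-\<eta>)*(real n - 1)/real n = - (\<eta>*(real n - 1)/real n)" by simp
    ultimately show ?thesis using ceq by linarith
  qed
  have V1: "(1::nat) \<in> {1..n}" and V2: "(2::nat) \<in> {1..n}" using n3 by auto
  have i1: "mean n x + c/2 - 2*d \<le> inr n \<rho> x (\<lambda>j. w j 1) 1"
  proof -
    have "mean n x + (\<eta> - 2*d)*(real n - 1)/real n \<le> inr n \<rho> x (\<lambda>j. w j 1) 1"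
      using fin_inr[OF n2 r0 an V1, of "\<eta> - 2*d" "\<lambda>j. w j 1" \<eta>] w w1 V1 by blast
    moreover have "(\<eta> - 2*d)*(real n - 1)/real n = \<eta>*(real n - 1)/real n - (2*d)*(real n - 1)/real n"
      by (simp add: diff_divide_distrib left_diff_distrib)
    ultimately show ?thesis using ceq d2 by linarith
  qed
  have i2: "inr n \<rho> x (\<lambda>j. w j 2) 2 \<le> mean n x - c/2 + 2*d"
  proof -
    have "inr n \<rho> x (\<lambda>j. w j 2) 2 \<le> mean n x + (-\<eta> + 2*d)*(real n - 1)/real n"
      using fin_inr[OF n2 r0 an V2, of "-\<eta>" "\<lambda>j. w j 2" "-\<eta> + 2*d"] w w2 V2 by blast
    moreover have "(-\<eta> + 2*d)*(real n - 1)/real n = (2*d)*(real n - 1)/real n - \<eta>*(real n - 1)/real n"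
      by (simp add: add_divide_distrib diff_divide_distrib algebra_simps)
    ultimately show ?thesis using ceq d2 by linarith
  qed
  let ?S = "{\<bar>x' i - x' j\<bar> | i j. i \<in> {1..n} \<and> j \<in> {1..n}}"
  have fin: "finite ?S" and ne: "?S \<noteq> {}" using Max_pairs[of n x'] n3 by auto
  have up: "Max ?S \<le> c"
  proof (subst Max_le_iff[OF fin ne], intro ballI)
    fix a assume "a \<in> ?S"
    then obtain i j where ij: "i \<in> {1..n}" "j \<in> {1..n}" "a = \<bar>x' i - x' j\<bar>" by blast
    have "a \<le> \<bar>inr n \<rho> x (\<lambda>k. w k i) i - inr n \<rho> x (\<lambda>k. w k j) j\<bar>" using ij x' proj_lip by simp
    also have "\<dots> \<le> c" using all[OF ij(1)] all[OF ij(2)] by (simp add: abs_le_iff)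
    finally show "a \<le> c" .
  qed
  have lo: "c - \<epsilon> \<le> \<bar>x' 1 - x' 2\<bar>"
  proof -
    have a: "min 1 (inr n \<rho> x (\<lambda>j. w j 1) 1) \<le> x' 1" using x' V1 proj_ge by simp
    have b: "x' 2 \<le> max 0 (inr n \<rho> x (\<lambda>j. w j 2) 2)" using x' V2 proj_le by simp
    have "c - 4*d \<le> x' 1 - x' 2"
      using a b i1 i2 m d c(2) by (simp add: min_def max_def split: if_splits)
    then show ?thesis using d by linarith
  qed
  have "\<bar>x' 1 - x' 2\<bar> \<in> ?S" using V1 V2 by blast
  then have "c - \<epsilon> \<le> Max ?S" using Max_ge[OF fin] lo by (meson order_trans)
  moreover have "in_cube n x'" using x' proj_0 proj_1 by (simp add: in_cube_def)
  ultimately show ?thesis using up unfolding E'_set_def by blast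
qed



lemma hist_len: "length (hist_C4 n r us b x0 t) = Suc t"
  by (induction t) simp_all

definition ctl :: "nat \<Rightarrow> real \<Rightarrow> real \<Rightarrow> real \<Rightarrow> real \<Rightarrow> nat \<Rightarrow> nat \<Rightarrow> (nat\<Rightarrow>real) \<Rightarrow> nat \<Rightarrow> nat \<Rightarrow> real" where
  "ctl n \<rho> \<eta> c d M k x j i =
    (if k \<le> M then -2*d
     else if allnb n \<rho> x then
       (if mean n x < c/2 then 2*d else if 1 - c/2 < mean n x then -2*d
        else if i = 1 then \<eta> - d else if i = 2 then -(\<eta> - d) else 0)
     else 2*d)"

definition Dm :: "nat \<Rightarrow> real \<Rightarrow> (nat\<Rightarrow>real) \<Rightarrow> real" where
  "Dm n c x = (if mean n x < c/2 then c/2 - mean n x else if 1 - c/2 < mean n x then mean n x - (1 - c/2) else 0)"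



lemma maxstep:
  assumes "0 < (d::real)" "D \<le> max 0 (1 - real k*d/2)"
  shows "max 0 (D - d/2) \<le> max 0 (1 - real (Suc k) * d/2)"
proof -
  have e: "real (Suc k) * d/2 = real k * d/2 + d/2" by (simp add: algebra_simps)
  show ?thesis
  proof (cases "0 \<le> 1 - real k*d/2")
    case True
    then have "D \<le> 1 - real k*d/2" using assms(2) by simp
    then show ?thesis unfolding e by (simp add: max_def)
  next
    case False
    then have "D \<le> 0" using assms(2) by simp
    then show ?thesis using assms(1) by (simp add: max_def)
  qed
qed

lemma traj:
  fixes n :: nat and \<rho> \<eta> \<epsilon> d c :: real and M :: nat
  assumes n3: "3 \<le> n" and rr: "1 / real (n - 1) \<le> \<rho>" and r1: "\<rho> < 1"
    and d: "0 < d" "4*d \<le> \<eta>" "8*d \<le> \<epsilon>" "8*d \<le> 1 - \<rho>" "30*d \<le> \<rho>"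
    and c: "c = 2*\<eta>*real (n-1)/real n" "c \<le> \<rho>"
    and M: "1 \<le> M" "1 \<le> real M * d / 2"
    and cube0: "in_cube n x0"
    and hb: "\<forall>t<3*M+1. \<forall>i\<in>{1..n}. \<forall>j\<in>{1..n}. \<bar>b t j i\<bar> \<le> d"
    and us: "us = (\<lambda>h j i. ctl n \<rho> \<eta> c d M (length h) (last h) j i)"
  shows "\<exists>t\<in>{1..3*M+1}. last (hist_C4 n (\<lambda>_. \<rho>) us b x0 t) \<in> E'_set n c \<epsilon>"
proof -
  let ?V = "{1..n::nat}"
  define X where "X t = last (hist_C4 n (\<lambda>_. \<rho>) us b x0 t)" for t
  define W where "W t j i = ctl n \<rho> \<eta> c d M (Suc t) (X t) j i + b t j i" for t j i
  have r0: "0 \<le> \<rho>" using d by linarith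
  have Xs: "\<forall>i\<in>?V. X (Suc t) i = proj01 (inr n \<rho> (X t) (\<lambda>j. W t j i) i)" for t
  proof
    fix i assume i: "i \<in> ?V"
    have "X (Suc t) = step_C4 n (\<lambda>_. \<rho>) (X t) (us (hist_C4 n (\<lambda>_. \<rho>) us b x0 t)) (b t)"
      unfolding X_def by simp
    also have "us (hist_C4 n (\<lambda>_. \<rho>) us b x0 t) = (\<lambda>j i. ctl n \<rho> \<eta> c d M (Suc t) (X t) j i)"
      unfolding us X_def hist_len by simp
    finally show "X (Suc t) i = proj01 (inr n \<rho> (X t) (\<lambda>j. W t j i) i)"
      using step_eq[OF i r0] unfolding W_def by simp
  qed
  have cube: "in_cube n (X t)" for t
  proof (cases t)
    case 0 then show ?thesis using cube0 unfolding X_def by simp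
  next
    case (Suc s) then show ?thesis using Xs[of s] proj_0 proj_1 by (simp add: in_cube_def)
  qed
  have n2: "2 \<le> n" using n3 by simp
  have ph1: "\<forall>r\<in>?V - Fz n \<rho> (X t). X t r \<le> max 0 (1 - real t * d / 2)" if "t \<le> M" for t
    using that
  proof (induction t)
    case 0
    then show ?case using cube[of 0] by (auto simp: in_cube_def)
  next
    case (Suc t)
    have tM: "t < M" "t \<le> M" using Suc.prems by auto
    have w: "\<forall>i\<in>?V. \<forall>j\<in>?V. W t j i \<le> -d"
    proof (intro ballI)
      fix i j assume "i \<in> ?V" "j \<in> ?V"
      then have "\<bar>b t j i\<bar> \<le> d" using hb tM by auto
      moreover have "ctl n \<rho> \<eta> c d M (Suc t) (X t) j i = -2*d" using tM by (simp add: ctl_def)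
      ultimately show "W t j i \<le> -d" unfolding W_def by linarith
    qed
    have sub: "Fz n \<rho> (X t) \<subseteq> Fz n \<rho> (X (Suc t))"
      using ph1_step[OF n3 rr r0 d(1) _ cube w Xs] d by linarith
    show ?case
    proof
      fix r assume r: "r \<in> ?V - Fz n \<rho> (X (Suc t))"
      then have r': "r \<in> ?V - Fz n \<rho> (X t)" using sub by blast
      have "X (Suc t) r \<le> max 0 (max 0 (1 - real t * d / 2) - d/2)"
        using ph1_key[OF r0 d(1) _ cube w Xs Suc.IH[OF tM(2)] r'] d by linarith
      also have "\<dots> \<le> max 0 (1 - real (Suc t) * d / 2)" using d(1) by (auto simp: algebra_simps max_def)
      finally show "X (Suc t) r \<le> max 0 (1 - real (Suc t) * d / 2)" .
    qed
  qed
  define G0 where "G0 = ?V - Fz n \<rho> (X M)"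
  have G0z: "\<forall>g\<in>G0. X M g = 0"
  proof
    fix g assume g: "g \<in> G0"
    have "X M g \<le> max 0 (1 - real M * d / 2)" using ph1[of M] g unfolding G0_def by blast
    moreover have "max 0 (1 - real M * d / 2) = 0" using M by simp
    moreover have "0 \<le> X M g" using cube[of M] g unfolding G0_def in_cube_def by blast
    ultimately show "X M g = 0" by simp
  qed
  have Inv0: "Inv n \<rho> d (X M) G0"
    unfolding Inv_def
  proof (intro conjI)
    show "G0 \<subseteq> ?V" unfolding G0_def by blast
    obtain i j where ij: "i\<in>?V" "j\<in>?V" "i \<noteq> j" "i \<notin> Fz n \<rho> (X M)" "j \<notin> Fz n \<rho> (X M)"
      using R_ne[OF n3 rr cube r0] by blast
    have "{i, j} \<subseteq> G0" using ij unfolding G0_def by blast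
    then have "card {i, j} \<le> card G0" using card_mono[of G0] unfolding G0_def by (simp add: finite_subset)
    then show "2 \<le> card G0" using ij by simp
    have VG: "?V - G0 = Fz n \<rho> (X M)" unfolding G0_def Fz_def by blast
    show "\<forall>f\<in>?V - G0. \<forall>g\<in>G0. X M g + \<rho> - 4*d < X M f"
    proof (intro ballI)
      fix f g assume f: "f \<in> ?V - G0" and g: "g \<in> G0"
      have "X M g < X M f - \<rho>" using Fz_below[of f n \<rho> "X M" g] f g VG unfolding G0_def by blast
      then show "X M g + \<rho> - 4*d < X M f" using d by linarith
    qed
    show "\<forall>f\<in>?V - G0. \<forall>f'\<in>?V - G0. f \<noteq> f' \<longrightarrow> \<rho> < \<bar>X M f - X M f'\<bar>"
    proof (intro ballI impI)
      fix f f' assume f: "f \<in> ?V - G0" and f': "f' \<in> ?V - G0" and ne: "f \<noteq> f'"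
      have "isoA n \<rho> (X M) f'" using f' VG unfolding Fz_def by blast
      then show "\<rho> < \<bar>X M f - X M f'\<bar>" using f ne unfolding isoA_def by auto
    qed
    show "\<forall>g\<in>G0. \<forall>g'\<in>G0. \<bar>X M g - X M g'\<bar> \<le> \<rho>" using G0z r0 by simp
    show "(\<forall>g\<in>G0. \<forall>g'\<in>G0. \<bar>X M g - X M g'\<bar> \<le> 3*d) \<or> (\<forall>f\<in>?V - G0. \<forall>g\<in>G0. X M g + \<rho> + 4*d < X M f)"
      using G0z d by simp
  qed
  have ph2: "\<exists>G. Inv n \<rho> d (X (M+k)) G \<and> (\<forall>g\<in>G. min 1 (real k * d/2) \<le> X (M+k) g)"
    if "k \<le> M" "\<forall>s<k. \<not> allnb n \<rho> (X (M+s))" for k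
    using that
  proof (induction k)
    case 0
    then show ?case using Inv0 G0z by auto
  next
    case (Suc k)
    obtain G where G: "Inv n \<rho> d (X (M+k)) G" "\<forall>g\<in>G. min 1 (real k * d/2) \<le> X (M+k) g"
      using Suc.IH Suc.prems by auto
    have na: "\<not> allnb n \<rho> (X (M+k))" using Suc.prems by auto
    have w: "\<forall>i\<in>?V. \<forall>j\<in>?V. d \<le> W (M+k) j i \<and> W (M+k) j i \<le> 3*d"
    proof (intro ballI)
      fix i j assume "i \<in> ?V" "j \<in> ?V"
      then have "\<bar>b (M+k) j i\<bar> \<le> d" using hb Suc.prems by auto
      moreover have "ctl n \<rho> \<eta> c d M (Suc (M+k)) (X (M+k)) j i = 2*d" using na by (simp add: ctl_def)
      ultimately show "d \<le> W (M+k) j i \<and> W (M+k) j i \<le> 3*d" unfolding W_def by (simp add: abs_le_iff)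
    qed
    obtain G' where G': "Inv n \<rho> d (X (Suc (M+k))) G'"
      "\<forall>g\<in>G'. min 1 (min 1 (real k * d/2) + d/2) \<le> X (Suc (M+k)) g"
      using ph2_step[OF r0 d(1) d(5) G(1) cube w Xs G(2)] by blast
    have "min 1 (real (Suc k) * d/2) \<le> min 1 (min 1 (real k * d/2) + d/2)"
      using d by (simp add: algebra_simps min_def)
    then show ?case using G' by fastforce
  qed
  have "\<exists>s\<le>M. allnb n \<rho> (X (M+s))"
  proof (rule ccontr)
    assume "\<not> ?thesis"
    then have na: "\<forall>s\<le>M. \<not> allnb n \<rho> (X (M+s))" by blast
    obtain G where G: "Inv n \<rho> d (X (M+M)) G" "\<forall>g\<in>G. min 1 (real M * d/2) \<le> X (M+M) g"
      using ph2[of M] na by auto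
    have GV: "G \<subseteq> ?V" and cG: "2 \<le> card G" and ia: "\<forall>f\<in>?V-G. \<forall>g\<in>G. X (M+M) g + \<rho> - 4*d < X (M+M) f"
      and ic: "\<forall>g\<in>G. \<forall>g'\<in>G. \<bar>X (M+M) g - X (M+M) g'\<bar> \<le> \<rho>"
      using G(1) unfolding Inv_def by blast+
    have "G \<noteq> ?V"
    proof
      assume "G = ?V"
      then have "allnb n \<rho> (X (M+M))" using ic unfolding allnb_def by blast
      then show False using na by auto
    qed
    then obtain f where f: "f \<in> ?V - G" using GV by blast
    obtain g where g: "g \<in> G" using cG by fastforce
    have "1 \<le> X (M+M) g" using G(2) g M by simp
    moreover have "X (M+M) g + \<rho> - 4*d < X (M+M) f" using ia f g by blast
    moreover have "X (M+M) f \<le> 1" using cube[of "M+M"] f unfolding in_cube_def by blast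
    ultimately show False using d by linarith
  qed
  then obtain s2 where s2: "s2 \<le> M" "allnb n \<rho> (X (M+s2))" by blast
  define t2 where "t2 = M + s2"
  have c0: "0 \<le> c" using c d n3 by simp
  have meanb: "0 \<le> mean n (X t) \<and> mean n (X t) \<le> 1" for t
    using mean_bounds[of n 0 "X t" 1] cube[of t] n3 unfolding in_cube_def by simp
  have D0: "0 \<le> Dm n c x" for x unfolding Dm_def by simp
  have ph3: "allnb n \<rho> (X (t2+k)) \<and> Dm n c (X (t2+k)) \<le> max 0 (1 - real k * d/2)"
    if "k \<le> M" "\<forall>s<k. 0 < Dm n c (X (t2+s))" for k
    using that
  proof (induction k)
    case 0
    have "Dm n c (X t2) \<le> 1" using meanb[of t2] c0 c r1 unfolding Dm_def by auto
    then show ?case using s2 unfolding t2_def by simp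
  next
    case (Suc k)
    have IH: "allnb n \<rho> (X (t2+k))" "Dm n c (X (t2+k)) \<le> max 0 (1 - real k * d/2)"
      using Suc.IH Suc.prems by auto
    have Dp: "0 < Dm n c (X (t2+k))" using Suc.prems by auto
    let ?m = "mean n (X (t2+k))"
    have tT: "t2 + k < 3*M+1" using Suc.prems s2 unfolding t2_def by linarith
    have gM: "\<not> Suc (t2+k) \<le> M" unfolding t2_def by simp
    have bb: "\<bar>b (t2+k) j i\<bar> \<le> d" if "i \<in> ?V" "j \<in> ?V" for i j using hb tT that by blast
    show ?case
    proof (cases "?m < c/2")
      case True
      have w: "\<forall>i\<in>?V. \<forall>j\<in>?V. d \<le> W (t2+k) j i \<and> W (t2+k) j i \<le> 3*d"
      proof (intro ballI)
        fix i j assume ij: "i \<in> ?V" "j \<in> ?V"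
        have "ctl n \<rho> \<eta> c d M (Suc (t2+k)) (X (t2+k)) j i = 2*d" using gM IH(1) True by (simp add: ctl_def)
        then show "d \<le> W (t2+k) j i \<and> W (t2+k) j i \<le> 3*d" using bb[OF ij] unfolding W_def by (simp add: abs_le_iff)
      qed
      have m1: "?m + 3*d \<le> 1" using True c d by linarith
      have R: "allnb n \<rho> (X (Suc (t2+k))) \<and> ?m + d/2 \<le> mean n (X (Suc (t2+k))) \<and> mean n (X (Suc (t2+k))) \<le> ?m + 3*d"
      proof -
        have "3*d \<le> \<rho>" using d by linarith
        then show ?thesis using fin_up[OF n2 r0 d(1) _ IH(1) _ m1 w Xs] meanb[of "t2+k"] by blast
      qed
      have "Dm n c (X (Suc (t2+k))) \<le> max 0 (Dm n c (X (t2+k)) - d/2)"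
        using R True c(2) r1 d unfolding Dm_def by (auto simp: max_def; linarith)
      also have "\<dots> \<le> max 0 (1 - real (Suc k) * d/2)" using maxstep[OF d(1) IH(2)] .
      finally show ?thesis using R by simp
    next
      case False
      then have m2: "1 - c/2 < ?m" using Dp unfolding Dm_def by (auto split: if_splits)
      have w: "\<forall>i\<in>?V. \<forall>j\<in>?V. -3*d \<le> W (t2+k) j i \<and> W (t2+k) j i \<le> -d"
      proof (intro ballI)
        fix i j assume ij: "i \<in> ?V" "j \<in> ?V"
        have "ctl n \<rho> \<eta> c d M (Suc (t2+k)) (X (t2+k)) j i = -2*d" using gM IH(1) False m2 by (simp add: ctl_def)
        then show "-3*d \<le> W (t2+k) j i \<and> W (t2+k) j i \<le> -d" using bb[OF ij] unfolding W_def by (simp add: abs_le_iff)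
      qed
      have m1: "3*d \<le> ?m" using m2 c d by linarith
      have R: "allnb n \<rho> (X (Suc (t2+k))) \<and> ?m - 3*d \<le> mean n (X (Suc (t2+k))) \<and> mean n (X (Suc (t2+k))) \<le> ?m - d/2"
      proof -
        have "3*d \<le> \<rho>" using d by linarith
        then show ?thesis using fin_down[OF n2 r0 d(1) _ IH(1) m1 _ w Xs] meanb[of "t2+k"] by blast
      qed
      have "Dm n c (X (Suc (t2+k))) \<le> max 0 (Dm n c (X (t2+k)) - d/2)"
        using R False m2 c(2) r1 d unfolding Dm_def by (auto simp: max_def; linarith)
      also have "\<dots> \<le> max 0 (1 - real (Suc k) * d/2)" using maxstep[OF d(1) IH(2)] .
      finally show ?thesis using R by simp
    qed
  qed
  have "\<exists>s\<le>M. Dm n c (X (t2+s)) = 0"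
  proof (rule ccontr)
    assume "\<not> ?thesis"
    have "\<forall>s\<le>M. 0 < Dm n c (X (t2+s))"
    proof (intro allI impI)
      fix s assume "s \<le> M"
      then have "Dm n c (X (t2+s)) \<noteq> 0" using \<open>\<not> (\<exists>s\<le>M. Dm n c (X (t2+s)) = 0)\<close> by blast
      then show "0 < Dm n c (X (t2+s))" using D0[of "X (t2+s)"] by linarith
    qed
    then have "Dm n c (X (t2+M)) \<le> max 0 (1 - real M * d/2)" "0 < Dm n c (X (t2+M))" using ph3[of M] by auto
    then show False using M by simp
  qed
  then obtain s0 where s0: "s0 \<le> M" "Dm n c (X (t2+s0)) = 0" by blast
  obtain s3 where s3': "s3 \<le> s0" "\<forall>s<s3. Dm n c (X (t2+s)) \<noteq> 0" "Dm n c (X (t2+s3)) = 0"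
    using ex_least_nat_le[of "\<lambda>s. Dm n c (X (t2+s)) = 0", OF s0(2)] by blast
  have s3: "s3 \<le> M" "Dm n c (X (t2+s3)) = 0" "\<forall>s<s3. Dm n c (X (t2+s)) \<noteq> 0" using s3' s0 by auto
  have "\<forall>s<s3. 0 < Dm n c (X (t2 + s))"
  proof (intro allI impI)
    fix s assume "s < s3"
    then have "Dm n c (X (t2+s)) \<noteq> 0" using s3 by blast
    then show "0 < Dm n c (X (t2+s))" using D0[of "X (t2+s)"] by linarith
  qed
  then have an3: "allnb n \<rho> (X (t2+s3))" using ph3[of s3] s3 by blast
  define t3 where "t3 = t2 + s3"
  have m3: "c/2 \<le> mean n (X t3)" "mean n (X t3) \<le> 1 - c/2" using s3(2) unfolding Dm_def t3_def
    by (auto split: if_splits)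
  have tT: "t3 < 3*M+1" using s2 s3 unfolding t3_def t2_def by linarith
  have gM: "\<not> Suc t3 \<le> M" unfolding t3_def t2_def by simp
  have bb: "\<bar>b t3 j i\<bar> \<le> d" if "i \<in> ?V" "j \<in> ?V" for i j using hb tT that by blast
  have ct: "ctl n \<rho> \<eta> c d M (Suc t3) (X t3) j i = (if i = 1 then \<eta> - d else if i = 2 then -(\<eta> - d) else 0)" for i j
    using gM an3 m3 unfolding ctl_def t3_def by auto
  have w: "\<forall>i\<in>?V. \<forall>j\<in>?V. -\<eta> \<le> W t3 j i \<and> W t3 j i \<le> \<eta>"
  proof (intro ballI)
    fix i j assume ij: "i \<in> ?V" "j \<in> ?V"
    show "-\<eta> \<le> W t3 j i \<and> W t3 j i \<le> \<eta>" using bb[OF ij] d unfolding W_def ct by (auto simp: abs_le_iff)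
  qed
  have w1: "\<forall>j\<in>?V. \<eta> - 2*d \<le> W t3 j 1" using bb n3 unfolding W_def ct by (force simp: abs_le_iff)
  have w2: "\<forall>j\<in>?V. W t3 j 2 \<le> -\<eta> + 2*d" using bb n3 unfolding W_def ct by (force simp: abs_le_iff)
  have "X (Suc t3) \<in> E'_set n c \<epsilon>"
  proof -
    have "c < 1" "0 \<le> d" "4*d \<le> \<epsilon>" using c r1 d by linarith+
    then show ?thesis using fin_spread[OF n3 r0 _ c(1) _ _ _ m3 w w1 w2 Xs] an3 unfolding t3_def by blast
  qed
  moreover have "Suc t3 \<in> {1..3*M+1}" using tT by simp
  ultimately show ?thesis unfolding X_def by blast
qed



theorem lemma11:
  fixes n :: nat and \<rho> \<eta> \<epsilon> :: real
  assumes "n \<ge> 3"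
    and "1 / real (n - 1) \<le> \<rho>" and "\<rho> < 1"
    and "\<eta> > 0"
    and "\<eta> \<le> real n * \<rho> / (2 * real (n - 1))"
    and "\<epsilon> > 0"
  shows "rob_reachable_C4 n (\<lambda>_. \<rho>) \<eta>
           (E'_set n (2 * \<eta> * real (n - 1) / real n) \<epsilon>)"
proof -
  note n3 = assms(1) and rr = assms(2) and r1 = assms(3) and eta = assms(4) and etab = assms(5) and eps = assms(6)
  have n1p: "0 < real (n - 1)" using n3 by simp
  have npos: "0 < real n" using n3 by simp
  have rpos: "0 < \<rho>" using rr n1p by (meson divide_pos_pos less_le_trans zero_less_one)
  define d where "d = min (min (\<eta>/4) (\<epsilon>/8)) (min ((1-\<rho>)/8) (\<rho>/30))"
  have d: "0 < d" "4*d \<le> \<eta>" "8*d \<le> \<epsilon>" "8*d \<le> 1 - \<rho>" "30*d \<le> \<rho>"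
  proof -
    have a: "d \<le> \<eta>/4" "d \<le> \<epsilon>/8" "d \<le> (1-\<rho>)/8" "d \<le> \<rho>/30" unfolding d_def by (meson min.cobounded1 min.cobounded2 order_trans)+
    show "0 < d" unfolding d_def using eta eps r1 rpos by auto
    show "4*d \<le> \<eta>" using a by linarith
    show "8*d \<le> \<epsilon>" using a by linarith
    show "8*d \<le> 1 - \<rho>" using a(3) by (simp add: field_simps)
    show "30*d \<le> \<rho>" using a by linarith
  qed
  define c where "c = 2 * \<eta> * real (n - 1) / real n"
  have cr: "c \<le> \<rho>"
  proof -
    have "\<eta> * (2 * real (n - 1)) \<le> real n * \<rho>" using etab n1p by (simp add: le_divide_eq)
    then have "2 * \<eta> * real (n - 1) \<le> \<rho> * real n" by (simp add: algebra_simps)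
    then show ?thesis unfolding c_def using npos by (simp add: divide_le_eq)
  qed
  define M where "M = nat \<lceil>2/d\<rceil> + 1"
  have M1: "1 \<le> M" unfolding M_def by simp
  have M2: "1 \<le> real M * d / 2"
  proof -
    have "2/d \<le> real (nat \<lceil>2/d\<rceil>)" by linarith
    then have "2/d + 1 \<le> real M" unfolding M_def by simp
    then have "(2/d + 1) * d \<le> real M * d" using d(1) by (intro mult_right_mono) auto
    then have "2 + d \<le> real M * d" using d(1) by (simp add: algebra_simps)
    then show ?thesis using d(1) by simp
  qed
  define us where "us = (\<lambda>h j i. ctl n \<rho> \<eta> c d M (length h) (last (h::(nat\<Rightarrow>real) list)) j i)"
  show ?thesis
    unfolding rob_reachable_C4_def
  proof (intro exI[of _ "3*M+1"] conjI exI[of _ d] allI impI disjI2)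
    show "0 < 3*M+1" by simp
    show "0 < d" by (rule d(1))
    show "d < \<eta>" using d eta by linarith
    fix x0 :: "nat \<Rightarrow> real" assume cube0: "in_cube n x0"
    show "\<exists>(\<delta>s :: (nat \<Rightarrow> real) list \<Rightarrow> nat \<Rightarrow> real) us.
           (\<forall>h. \<forall>i\<in>{1..n}. d \<le> \<delta>s h i \<and> \<delta>s h i < \<eta>) \<and>
           (\<forall>h. \<forall>i\<in>{1..n}. \<forall>j\<in>{1..n}. - \<eta> + \<delta>s h i \<le> us h j i \<and> us h j i \<le> \<eta> - \<delta>s h i) \<and>
           (\<forall>b. (\<forall>t<3*M+1. \<forall>i\<in>{1..n}. \<forall>j\<in>{1..n}.
                    \<bar>b t j i\<bar> \<le> \<delta>s (hist_C4 n (\<lambda>_. \<rho>) us b x0 t) i)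
                \<longrightarrow> (\<exists>t\<in>{1..3*M+1}. last (hist_C4 n (\<lambda>_. \<rho>) us b x0 t) \<in> E'_set n (2 * \<eta> * real (n - 1) / real n) \<epsilon>))"
    proof (intro exI[of _ "\<lambda>h i. d"] exI[of _ us] conjI allI impI ballI)
      fix h :: "(nat\<Rightarrow>real) list" and i assume "i \<in> {1..n}"
      show "d \<le> d" by simp
      show "d < \<eta>" using d eta by linarith
    next
      fix h :: "(nat\<Rightarrow>real) list" and i j assume "i \<in> {1..n}" "j \<in> {1..n}"
      show "- \<eta> + d \<le> us h j i" using d unfolding us_def ctl_def by auto
      show "us h j i \<le> \<eta> - d" using d unfolding us_def ctl_def by auto
    next
      fix b :: "nat \<Rightarrow> nat \<Rightarrow> nat \<Rightarrow> real"
      assume hb: "\<forall>t<3*M+1. \<forall>i\<in>{1..n}. \<forall>j\<in>{1..n}. \<bar>b t j i\<bar> \<le> d"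
      show "\<exists>t\<in>{1..3*M+1}. last (hist_C4 n (\<lambda>_. \<rho>) us b x0 t) \<in> E'_set n (2 * \<eta> * real (n - 1) / real n) \<epsilon>"
        using traj[OF n3 rr r1 d c_def cr M1 M2 cube0 hb us_def] unfolding c_def .
    qed
  qed
qed


end
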